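(* Let $N\in\mathbb{N}$ be odd and either prime or divisible by at least two distinct primes. Let $b\in\mathbb{Z}$ and $f\in\mathbb{Z}[X]$ with $f(b)=N$, let $d:=\deg f$, and suppose $d$ is smaller than $q:=\max\{q'\text{ prime}:q'\mid N\}$ and $\gcd(\mathrm{lc}(f),N)=1$, where $\mathrm{lc}(f)$ is the leading coefficient of $f$. Then \[N\text{ is prime}\iff \forall x\in\{0,\dots,N-1\}:\ f(x)^{(N-1)/2}\bmod N\in\{-1,0,1\}\] (where $-1$ denotes the residue $N-1$). *)

theory Defs
  imports "HOL-Computational_Algebra.Computational_Algebra"
begin

end

theory Submission
  imports Defs "HOL-Number_Theory.Number_Theory"
begin

lemma poly_cong_int:
  fixes f :: "int poly" and x y m :: int
  assumes "[x = y] (mod m)"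
  shows "[poly f x = poly f y] (mod m)"
proof (induction f)
  case 0 then show ?case by simp
next
  case (pCons a p)
  then show ?case by (simp add: cong_add cong_mult assms)
qed

lemma fermat_int:
  fixes p :: nat and a :: int
  assumes "prime p" "\<not> int p dvd a"
  shows "[a ^ (p - 1) = 1] (mod int p)"
proof -
  define a' where "a' = nat (a mod int p)"
  have p0: "int p > 0" using assms(1) prime_gt_0_nat by auto
  have ca: "[a = int a'] (mod int p)" unfolding a'_def using p0
    by (simp add: cong_def)
  have "\<not> p dvd a'"
  proof
    assume "p dvd a'"
    then have "int p dvd int a'" by simp
    with ca have "int p dvd a" using cong_dvd_iff by blast
    with assms(2) show False by simp
  qed
  then have "[a' ^ (p - 1) = 1] (mod p)" using fermat_theorem assms(1) by blast
  then have "[int a' ^ (p - 1) = 1] (mod int p)"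
    by (metis cong_int_iff of_nat_1 of_nat_power)
  moreover have "[a ^ (p - 1) = int a' ^ (p - 1)] (mod int p)"
    using ca cong_pow by blast
  ultimately show ?thesis using cong_trans by blast
qed

lemma euler_pm1:
  fixes p :: nat and a :: int
  assumes "prime p" "odd p"
  shows "a ^ ((p - 1) div 2) mod int p \<in> {int p - 1, 0, 1}"
proof (cases "int p dvd a")
  case True
  have "p \<ge> 3" using assms prime_ge_2_nat[OF assms(1)]
    by (metis One_nat_def Suc_1 Suc_leI dvd_refl le_neq_implies_less not_less_eq_eq numeral_3_eq_3 odd_one)
  then have "(p - 1) div 2 \<ge> 1" by auto
  then have "a dvd a ^ ((p - 1) div 2)" by (intro dvd_power) auto
  then have "int p dvd a ^ ((p - 1) div 2)" using True dvd_trans by blast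
  then show ?thesis by simp
next
  case False
  have p1: "int p > 1" using assms(1) prime_gt_1_nat by auto
  let ?e = "(p - 1) div 2"
  have "2 * ?e = p - 1" using assms(2) by auto
  then have "[(a ^ ?e)^2 = 1] (mod int p)"
    using fermat_int[OF assms(1) False] by (metis power_mult mult.commute)
  then have "int p dvd (a ^ ?e)^2 - 1" by (simp add: cong_iff_dvd_diff cong_sym_eq)
  then have "int p dvd (a ^ ?e - 1) * (a ^ ?e + 1)"
    by (simp add: power2_eq_square algebra_simps)
  moreover have "prime (int p)" using assms(1) by simp
  ultimately have "int p dvd (a ^ ?e - 1) \<or> int p dvd (a ^ ?e + 1)"
    using prime_dvd_mult_iff by blast
  then show ?thesis
  proof
    assume "int p dvd a ^ ?e - 1"
    then have "a ^ ?e mod int p = 1 mod int p" by (simp add: mod_eq_dvd_iff)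
    then show ?thesis using p1 by simp
  next
    assume "int p dvd a ^ ?e + 1"
    then have "a ^ ?e mod int p = (-1) mod int p"
      by (simp add: mod_eq_dvd_iff)
    also have "\<dots> = int p - 1" using p1 by (simp add: zmod_minus1)
    finally show ?thesis by simp
  qed
qed

lemma roots_bound:
  fixes q :: nat and f :: "int poly" and S :: "int set"
  assumes "prime q" "\<not> int q dvd lead_coeff f" "S \<subseteq> {0..<int q}"
    "\<forall>a\<in>S. int q dvd poly f a"
  shows "card S \<le> degree f"
  using assms(2-4)
proof (induction "degree f" arbitrary: f S)
  case 0
  then obtain c where f: "f = [:c:]" by (metis degree_eq_zeroE)
  then have "lead_coeff f = c" by simp
  show ?case
  proof (cases "S = {}")
    case False
    then obtain a where "a \<in> S" by blast
    with 0 f show ?thesis by auto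
  qed simp
next
  case (Suc n)
  show ?case
  proof (cases "S = {}")
    case True then show ?thesis by simp
  next
    case False
    then obtain a where aS: "a \<in> S" by blast
    define g where "g = synthetic_div f a"
    have fe: "f = [:-a, 1:] * g + [:poly f a:]" unfolding g_def
      using synthetic_div_correct'[of a f] by simp
    have dg: "degree g = n" unfolding g_def using Suc.hyps(2)
      by (simp add: degree_synthetic_div)
    have g0: "g \<noteq> 0" unfolding g_def using Suc.hyps(2)
      by (simp add: synthetic_div_eq_0_iff)
    have "Polynomial.coeff f (degree f) = Polynomial.coeff ([:-a, 1:] * g) (Suc n)"
      using fe Suc.hyps(2) by (metis coeff_add coeff_pCons_Suc add.right_neutral coeff_0 pCons_0_0 add_pCons)
    also have "\<dots> = lead_coeff g"
      using dg by (simp add: coeff_pCons_Suc coeff_eq_0)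
    finally have lc: "lead_coeff g = lead_coeff f" by simp
    have qp: "prime (int q)" using assms(1) by simp
    have q1: "int q > 1" using assms(1) prime_gt_1_nat by auto
    have "\<forall>a'\<in>S - {a}. int q dvd poly g a'"
    proof
      fix a' assume a': "a' \<in> S - {a}"
      have "poly f a' = (a' - a) * poly g a' + poly f a"
        by (subst fe) (simp add: algebra_simps)
      moreover have "int q dvd poly f a'" "int q dvd poly f a"
        using a' aS Suc.prems(3) by auto
      ultimately have "int q dvd (a' - a) * poly g a'"
        by (metis add_diff_cancel_right' dvd_diff)
      moreover have "\<not> int q dvd (a' - a)"
      proof
        assume d: "int q dvd (a' - a)"
        have "a' - a \<noteq> 0" using a' by auto
        then have "int q \<le> \<bar>a' - a\<bar>" using d
          by (metis dvd_imp_le_int abs_of_nat)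
        moreover have "a \<in> {0..<int q}" "a' \<in> {0..<int q}" using a' aS Suc.prems(2) by auto
        ultimately show False by auto
      qed
      ultimately show "int q dvd poly g a'" using qp prime_dvd_mult_iff by blast
    qed
    moreover have "S - {a} \<subseteq> {0..<int q}" using Suc.prems(2) by auto
    moreover have "\<not> int q dvd lead_coeff g" using lc Suc.prems(1) by simp
    ultimately have "card (S - {a}) \<le> n" using Suc.hyps(1)[of g "S - {a}"] dg by auto
    moreover have "finite S" using Suc.prems(2) finite_subset by blast
    ultimately show ?thesis using aS Suc.hyps(2)
      by (metis card_Diff1_le card_Suc_Diff1 Suc_le_mono)
  qed
qed

theorem corollary5p2:
  fixes N :: nat and b :: int and f :: "int poly"
  assumes "odd N"
    and "prime N \<or> card (prime_factors N) \<ge> 2"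
    and "poly f b = int N"
    and "degree f < Max (prime_factors N)"
    and "coprime (lead_coeff f) (int N)"
  shows "prime N \<longleftrightarrow>
    (\<forall>x\<in>{0..<N}. (poly f (int x)) ^ ((N - 1) div 2) mod int N \<in> {int N - 1, 0, 1})"
proof
  assume "prime N"
  then show "\<forall>x\<in>{0..<N}. (poly f (int x)) ^ ((N - 1) div 2) mod int N \<in> {int N - 1, 0, 1}"
    using euler_pm1 assms(1) by blast
next
  assume H: "\<forall>x\<in>{0..<N}. (poly f (int x)) ^ ((N - 1) div 2) mod int N \<in> {int N - 1, 0, 1}"
  show "prime N"
  proof (rule ccontr)
    assume np: "\<not> prime N"
    let ?P = "prime_factors N"
    have cP: "card ?P \<ge> 2" using np assms(2) by simp
    have N0: "N > 0" using assms(1) odd_pos by blast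
    have fin: "finite ?P" by simp
    have Pne: "?P \<noteq> {}" using cP by auto
    define q where "q = Max ?P"
    have qP: "q \<in> ?P" unfolding q_def using fin Pne by simp
    have "\<exists>p\<in>?P. p \<noteq> q"
    proof (rule ccontr)
      assume "\<not> (\<exists>p\<in>?P. p \<noteq> q)"
      then have "?P \<subseteq> {q}" by auto
      then have "card ?P \<le> 1" using card_mono[of "{q}" ?P] by simp
      with cP show False by simp
    qed
    then obtain p where pP: "p \<in> ?P" and pq: "p \<noteq> q" by blast
    have pp: "prime p" and pN: "p dvd N" using pP by auto
    have qp: "prime q" and qN: "q dvd N" using qP by auto
    have pip: "prime (int p)" "prime (int q)" using pp qp by simp_all
    have p1: "int p > 1" "int q > 1" using pp qp prime_gt_1_nat by auto
    have dq: "degree f < q" using assms(4) q_def by simp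
    have nlc: "\<not> int q dvd lead_coeff f"
    proof
      assume "int q dvd lead_coeff f"
      moreover have "int q dvd int N" using qN by simp
      ultimately have "is_unit (int q)" using assms(5) coprime_common_divisor by blast
      with p1 show False by simp
    qed
    have "\<exists>a\<in>{0..<int q}. \<not> int q dvd poly f a"
    proof (rule ccontr)
      assume "\<not> (\<exists>a\<in>{0..<int q}. \<not> int q dvd poly f a)"
      then have "card {0..<int q} \<le> degree f"
        using roots_bound[OF qp nlc, of "{0..<int q}"] by auto
      with dq show False by simp
    qed
    then obtain a where a: "a \<in> {0..<int q}" "\<not> int q dvd poly f a" by blast
    have cpq: "coprime (int p) (int q)" using pip pq by (simp add: primes_coprime)
    obtain y where y: "[y = b] (mod int p)" "[y = a] (mod int q)"
      using binary_chinese_remainder_int[OF cpq] by blast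
    define x0 where "x0 = y mod (int p * int q)"
    have "[x0 = y] (mod int p)" unfolding x0_def cong_def
      by (rule mod_mod_cancel) simp
    then have x0p: "[x0 = b] (mod int p)" using y(1) cong_trans by blast
    have "[x0 = y] (mod int q)" unfolding x0_def cong_def
      by (rule mod_mod_cancel) simp
    then have x0q: "[x0 = a] (mod int q)" using y(2) cong_trans by blast
    have x0r: "0 \<le> x0" "x0 < int p * int q" unfolding x0_def using p1 by auto
    have "p * q dvd N" using pN qN pq pp qp
      by (simp add: divides_mult primes_coprime)
    then have "p * q \<le> N" using N0 by (simp add: dvd_imp_le)
    define x where "x = nat x0"
    have "int (p * q) \<le> int N" using \<open>p * q \<le> N\<close> by (simp only: of_nat_le_iff)
    then have "x0 < int N" using x0r(2) by simp
    then have xN: "x \<in> {0..<N}" unfolding x_def using x0r by simp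
    have ix: "int x = x0" unfolding x_def using x0r by simp
    have "[poly f (int x) = poly f b] (mod int p)" using ix x0p poly_cong_int by simp
    moreover have "int p dvd poly f b" using assms(3) pN by simp
    ultimately have dp: "int p dvd poly f (int x)" using cong_dvd_iff by blast
    have "[poly f (int x) = poly f a] (mod int q)" using ix x0q poly_cong_int by simp
    then have dq': "\<not> int q dvd poly f (int x)" using a(2) cong_dvd_iff by blast
    define e where "e = (N - 1) div 2"
    have "p \<ge> 2" "q \<ge> 2" using pp qp prime_ge_2_nat by auto
    then have "p * q \<ge> 4" using mult_le_mono[of 2 p 2 q] by simp
    then have "N \<ge> 3" using \<open>p * q \<le> N\<close> by simp
    then have e1: "e \<ge> 1" unfolding e_def by auto
    define t where "t = poly f (int x) ^ e"
    have "poly f (int x) dvd t" unfolding t_def using e1 by (intro dvd_power) auto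
    then have dpt: "int p dvd t" using dp dvd_trans by blast
    have dqt: "\<not> int q dvd t" unfolding t_def using dq' pip(2) prime_dvd_power by blast
    define r where "r = t mod int N"
    have rH: "r \<in> {int N - 1, 0, 1}" using H xN unfolding r_def t_def e_def by blast
    have "int p dvd r" unfolding r_def using dpt pN by (simp add: dvd_mod_iff)
    moreover have "\<not> int q dvd r" unfolding r_def using dqt qN by (simp add: dvd_mod_iff)
    ultimately show False using rH p1 pN
    proof -
      have "r \<noteq> 0" using \<open>\<not> int q dvd r\<close> by auto
      moreover have "r \<noteq> 1" using \<open>int p dvd r\<close> p1 by auto
      moreover have "r \<noteq> int N - 1"
      proof
        assume "r = int N - 1"
        then have "int p dvd int N - 1" using \<open>int p dvd r\<close> by simp
        moreover have "int p dvd int N" using pN by simp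
        ultimately have "int p dvd int N - (int N - 1)" using dvd_diff by blast
        then have "int p dvd 1" by simp
        with p1 show False by simp
      qed
      ultimately show False using rH by auto
    qed
  qed
qed

end
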